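(* For each $N\ge1$ let $\eta^N(t)$ be an irreducible continuous-time Markov chain on a finite set $\Omega_N$ with jump rates $R_N(\eta,\xi)$ and unique stationary distribution $\nu_N$; let $A_N\subset\Omega_N$ with $\lim_N\nu_N(A_N)=0$ and $H_N=\inf\{t>0:\eta^N(t)\in A_N\}$. Let $S_N$ be a positive sequence, $\mu_N$ probability measures on $\Omega_N$, and $R'_N(\eta,A_N)=\mathbf 1\{\eta\in A_N^c\}R_N(\eta,A_N)$. Assume that for some sequence $\gamma_N>0$ with $\gamma_N^{-1}\gg S_N$, $$\lim_{N\to\infty}\Big\{\mu_N(A_N)+E_{\nu_N}[R'_N(\cdot,A_N)]\sum_{\eta\in\Omega_N}\mu_N(\eta)\frac1{\mathrm{Cap}_\star(\eta,\Omega^\star_N)}\Big\}=0.$$ Then $\lim_{N\to\infty}\mathbb P_{\mu_N}[H_N<S_N]=0$.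
   Context: $R_N(\eta,A_N)=\sum_{\zeta\in A_N}R_N(\eta,\zeta)$; $E_{\nu_N}$ is expectation with respect to $\nu_N$. $a_N\gg b_N$ means $b_N/a_N\to0$. Enlarged process associated to $\gamma_N$: let $\Omega^\star_N=\{\eta^\star:\eta\in\Omega_N\}$ be a disjoint copy of $\Omega_N$; the enlarged process is the Markov chain on $\Omega_N\cup\Omega^\star_N$ which from $\eta\in\Omega_N$ jumps to $\xi\in\Omega_N$ at rate $R_N(\eta,\xi)$ and to $\eta^\star$ at rate $\gamma_N$, and from $\eta^\star$ jumps to $\eta$ at rate $\gamma_N$ (no other jumps). Its stationary measure is $\nu^\star_N(\eta)=\nu^\star_N(\eta^\star)=\nu_N(\eta)/2$. With $\mathbb P^\star_\eta$ its law from $\eta$, $\lambda^\star(\eta)=\sum_\xi R_N(\eta,\xi)+\gamma_N$ its holding rate at $\eta$, $H_B=\inf\{s>0:\text{process}\in B\}$ and $H^+_\eta=\inf\{t>0:\text{process at }\eta\text{ at time }t\text{ and left }\eta\text{ before }t\}$, the capacity is $\mathrm{Cap}_\star(\eta,\Omega^\star_N)=\nu^\star_N(\eta)\lambda^\star(\eta)\mathbb P^\star_\eta[H_{\Omega^\star_N}<H^+_\eta]$. *)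

theory Defs
  imports "HOL-Probability.Probability"
begin

text \<open>Continuous-time Markov chain on a finite state set \<open>\<Omega>\<close> (carrier set inside type 'a),
  given by jump rates \<open>R x y\<close> (with \<open>R x x = 0\<close>). The process is realised by the standard
  jump-chain / holding-time construction: the embedded chain jumps from \<open>x\<close> to \<open>y\<close> with
  probability \<open>R x y / \<lambda>(x)\<close>, and it stays at the i-th visited state an exponential time of
  rate \<open>\<lambda>(x_i)\<close>, holding times independent given the embedded path.\<close>

definition rate_out :: "('a \<Rightarrow> 'a \<Rightarrow> real) \<Rightarrow> 'a set \<Rightarrow> 'a \<Rightarrow> real" where
  "rate_out R \<Omega> x = (\<Sum>y\<in>\<Omega>. R x y)"

definition jump_prob :: "('a \<Rightarrow> 'a \<Rightarrow> real) \<Rightarrow> 'a set \<Rightarrow> 'a \<Rightarrow> 'a \<Rightarrow> real" where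
  "jump_prob R \<Omega> x y = R x y / rate_out R \<Omega> x"

definition path_weight :: "('a \<Rightarrow> 'a \<Rightarrow> real) \<Rightarrow> 'a set \<Rightarrow> 'a list \<Rightarrow> real" where
  "path_weight R \<Omega> xs = (\<Prod>i<length xs - 1. jump_prob R \<Omega> (xs ! i) (xs ! Suc i))"

definition holding_law :: "('a \<Rightarrow> 'a \<Rightarrow> real) \<Rightarrow> 'a set \<Rightarrow> 'a list \<Rightarrow> (nat \<Rightarrow> real) measure" where
  "holding_law R \<Omega> xs =
     (\<Pi>\<^sub>M i\<in>{..<length xs - 1}. density lborel (exponential_density (rate_out R \<Omega> (xs ! i))))"

definition holding_sum_lt :: "('a \<Rightarrow> 'a \<Rightarrow> real) \<Rightarrow> 'a set \<Rightarrow> 'a list \<Rightarrow> real \<Rightarrow> real" where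
  "holding_sum_lt R \<Omega> xs t =
     measure (holding_law R \<Omega> xs)
       {E \<in> space (holding_law R \<Omega> xs). (\<Sum>i<length xs - 1. E i) < t}"

text \<open>Paths of the embedded chain from \<open>x\<close> which enter \<open>B\<close> for the first time at step \<open>n\<close>
  (for \<open>n = 0\<close>: \<open>x \<in> B\<close>, in which case \<open>H_B = 0\<close> by right continuity).\<close>
definition hit_paths :: "'a set \<Rightarrow> 'a set \<Rightarrow> 'a \<Rightarrow> nat \<Rightarrow> 'a list set" where
  "hit_paths \<Omega> B x n = {xs. length xs = Suc n \<and> set xs \<subseteq> \<Omega> \<and> xs ! 0 = x \<and>
                              (\<forall>i<n. xs ! i \<notin> B) \<and> xs ! n \<in> B}"

text \<open>\<open>P_x[H_B < t]\<close> with \<open>H_B = inf{s > 0. X(s) \<in> B}\<close>.\<close>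
definition prob_hit_before :: "('a \<Rightarrow> 'a \<Rightarrow> real) \<Rightarrow> 'a set \<Rightarrow> 'a set \<Rightarrow> 'a \<Rightarrow> real \<Rightarrow> real" where
  "prob_hit_before R \<Omega> B x t =
     (\<Sum>n. \<Sum>xs\<in>hit_paths \<Omega> B x n. path_weight R \<Omega> xs * holding_sum_lt R \<Omega> xs t)"

definition esc_paths :: "'a set \<Rightarrow> 'a set \<Rightarrow> 'a \<Rightarrow> nat \<Rightarrow> 'a list set" where
  "esc_paths \<Omega> B x n = {xs. length xs = Suc n \<and> set xs \<subseteq> \<Omega> \<and> xs ! 0 = x \<and>
                              (\<forall>i\<in>{1..<n}. xs ! i \<notin> B \<and> xs ! i \<noteq> x) \<and> xs ! n \<in> B}"

text \<open>\<open>P_x[H_B < H^+_x]\<close> (depends only on the embedded jump chain).\<close>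
definition escape_prob :: "('a \<Rightarrow> 'a \<Rightarrow> real) \<Rightarrow> 'a set \<Rightarrow> 'a set \<Rightarrow> 'a \<Rightarrow> real" where
  "escape_prob R \<Omega> B x = (\<Sum>n. \<Sum>xs\<in>esc_paths \<Omega> B x (Suc n). path_weight R \<Omega> xs)"

definition capacity :: "('a \<Rightarrow> 'a \<Rightarrow> real) \<Rightarrow> 'a set \<Rightarrow> ('a \<Rightarrow> real) \<Rightarrow> 'a set \<Rightarrow> 'a \<Rightarrow> real" where
  "capacity R \<Omega> \<pi> B x = \<pi> x * rate_out R \<Omega> x * escape_prob R \<Omega> B x"

text \<open>Enlarged process: \<open>Inl x\<close> is \<open>\<eta>\<close>, \<open>Inr x\<close> is the copy \<open>\<eta>\<^sup>\<star>\<close>.\<close>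
definition enl_space :: "'a set \<Rightarrow> ('a + 'a) set" where
  "enl_space \<Omega> = Inl ` \<Omega> \<union> Inr ` \<Omega>"

fun enl_rates :: "('a \<Rightarrow> 'a \<Rightarrow> real) \<Rightarrow> real \<Rightarrow> 'a + 'a \<Rightarrow> 'a + 'a \<Rightarrow> real" where
  "enl_rates R \<gamma> (Inl x) (Inl y) = R x y"
| "enl_rates R \<gamma> (Inl x) (Inr y) = (if x = y then \<gamma> else 0)"
| "enl_rates R \<gamma> (Inr x) (Inl y) = (if x = y then \<gamma> else 0)"
| "enl_rates R \<gamma> (Inr x) (Inr y) = 0"

fun enl_measure :: "('a \<Rightarrow> real) \<Rightarrow> 'a + 'a \<Rightarrow> real" where
  "enl_measure \<nu> (Inl x) = \<nu> x / 2"
| "enl_measure \<nu> (Inr x) = \<nu> x / 2"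

definition cap_star :: "('a \<Rightarrow> 'a \<Rightarrow> real) \<Rightarrow> 'a set \<Rightarrow> ('a \<Rightarrow> real) \<Rightarrow> real \<Rightarrow> 'a \<Rightarrow> real" where
  "cap_star R \<Omega> \<nu> \<gamma> \<eta> =
     capacity (enl_rates R \<gamma>) (enl_space \<Omega>) (enl_measure \<nu>) (Inr ` \<Omega>) (Inl \<eta>)"

definition irreducible_rates :: "('a \<Rightarrow> 'a \<Rightarrow> real) \<Rightarrow> 'a set \<Rightarrow> bool" where
  "irreducible_rates R \<Omega> \<longleftrightarrow>
     (\<forall>x\<in>\<Omega>. \<forall>y\<in>\<Omega>. (x, y) \<in> {(a, b). a \<in> \<Omega> \<and> b \<in> \<Omega> \<and> R a b > 0}\<^sup>*)"

definition stationary :: "('a \<Rightarrow> 'a \<Rightarrow> real) \<Rightarrow> 'a set \<Rightarrow> ('a \<Rightarrow> real) \<Rightarrow> bool" where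
  "stationary R \<Omega> \<nu> \<longleftrightarrow> (\<forall>x\<in>\<Omega>. \<nu> x \<ge> 0) \<and> (\<Sum>x\<in>\<Omega>. \<nu> x) = 1 \<and>
     (\<forall>y\<in>\<Omega>. (\<Sum>x\<in>\<Omega>. \<nu> x * R x y) = \<nu> y * rate_out R \<Omega> y)"

definition prob_on :: "'a set \<Rightarrow> ('a \<Rightarrow> real) \<Rightarrow> bool" where
  "prob_on \<Omega> \<mu> \<longleftrightarrow> (\<forall>x\<in>\<Omega>. \<mu> x \<ge> 0) \<and> (\<Sum>x\<in>\<Omega>. \<mu> x) = 1"

end

theory Submission
  imports Defs
begin


lemma exp_laplace:
  fixes l g :: real assumes "l > 0" "g > 0"
  shows "(\<integral>\<^sup>+ x. ennreal (exp (- g * x)) \<partial>density lborel (exponential_density l)) = ennreal (l / (l + g))"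
proof -
  have "(\<integral>\<^sup>+ x. ennreal (exp (- g * x)) \<partial>density lborel (exponential_density l))
      = (\<integral>\<^sup>+ x. ennreal (exponential_density l x) * ennreal (exp (- g * x)) \<partial>lborel)"
    by (subst nn_integral_density) (auto simp: exponential_density_def)
  also have "\<dots> = (\<integral>\<^sup>+ x. ennreal (l / (l + g)) * ennreal (exponential_density (l + g) x) \<partial>lborel)"
  proof (intro nn_integral_cong)
    fix x :: real
    have "exponential_density l x * exp (- g * x) = l / (l + g) * exponential_density (l + g) x"
      using assms by (auto simp: exponential_density_def field_simps exp_add[symmetric] algebra_simps)
    then show "ennreal (exponential_density l x) * ennreal (exp (- g * x)) = ennreal (l / (l + g)) * ennreal (exponential_density (l + g) x)"
      using assms by (simp add: ennreal_mult'[symmetric] exponential_density_def)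
  qed
  also have "\<dots> = ennreal (l / (l + g)) * (\<integral>\<^sup>+ x. ennreal (exponential_density (l + g) x) \<partial>lborel)"
    by (rule nn_integral_cmult) (auto simp: exponential_density_def)
  also have "(\<integral>\<^sup>+ x. ennreal (exponential_density (l + g) x) \<partial>lborel) = 1"
  proof -
    interpret prob_space "density lborel (exponential_density (l + g))"
      using assms by (intro prob_space_exponential_density) auto
    have "emeasure (density lborel (exponential_density (l + g))) UNIV = 1"
      using emeasure_space_1 by simp
    then show ?thesis by (subst (asm) emeasure_density) (auto simp: exponential_density_def)
  qed
  finally show ?thesis by simp
qed

lemma hold_meas:
  fixes l :: "nat \<Rightarrow> real" and g t :: real
  assumes l: "\<And>i. i < n \<Longrightarrow> l i > 0" and g: "g > 0"
  shows "measure (\<Pi>\<^sub>M i\<in>{..<n}. density lborel (exponential_density (l i)))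
           {E \<in> space (\<Pi>\<^sub>M i\<in>{..<n}. density lborel (exponential_density (l i))). (\<Sum>i<n. E i) < t}
         \<le> exp (g * t) * (\<Prod>i<n. l i / (l i + g))"
    and "measure (\<Pi>\<^sub>M i\<in>{..<n}. density lborel (exponential_density (l i)))
           {E \<in> space (\<Pi>\<^sub>M i\<in>{..<n}. density lborel (exponential_density (l i))). (\<Sum>i<n. E i) < t} \<le> 1"
proof -
  define M' where "M' i = density lborel (exponential_density (if i < n then l i else 1))" for i
  have eq: "(\<Pi>\<^sub>M i\<in>{..<n}. density lborel (exponential_density (l i))) = PiM {..<n} M'"
    by (rule PiM_cong) (auto simp: M'_def)
  have ps: "prob_space (M' i)" for i
    unfolding M'_def using l by (intro prob_space_exponential_density) auto
  interpret product_sigma_finite M'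
    unfolding product_sigma_finite_def using ps by (auto intro: prob_space_imp_sigma_finite)
  interpret P: prob_space "PiM {..<n} M'" by (rule prob_space_PiM) (use ps in auto)
  define X where "X = {E \<in> space (PiM {..<n} M'). (\<Sum>i<n. E i) < t}"
  have Xm: "X \<in> sets (PiM {..<n} M')"
    unfolding X_def M'_def by measurable
  have "emeasure (PiM {..<n} M') X = (\<integral>\<^sup>+ E. indicator X E \<partial>PiM {..<n} M')"
    using Xm by simp
  also have "\<dots> \<le> (\<integral>\<^sup>+ E. ennreal (exp (g * t)) * (\<Prod>i<n. ennreal (exp (- g * E i))) \<partial>PiM {..<n} M')"
  proof (intro nn_integral_mono)
    fix E assume E: "E \<in> space (PiM {..<n} M')"
    show "indicator X E \<le> ennreal (exp (g * t)) * (\<Prod>i<n. ennreal (exp (- g * E i)))"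
    proof (cases "E \<in> X")
      case True
      then have "(\<Sum>i<n. E i) < t" by (simp add: X_def)
      then have "g * (\<Sum>i<n. E i) \<le> g * t" using g by simp
      then have "1 \<le> exp (g * t) * exp (- g * (\<Sum>i<n. E i))"
        by (simp add: exp_add[symmetric])
      also have "exp (- g * (\<Sum>i<n. E i)) = (\<Prod>i<n. exp (- g * E i))"
        by (simp add: sum_distrib_left exp_sum)
      finally have "1 \<le> exp (g * t) * (\<Prod>i<n. exp (- g * E i))" .
      then have "ennreal 1 \<le> ennreal (exp (g * t) * (\<Prod>i<n. exp (- g * E i)))"
        by (rule ennreal_leI)
      then show ?thesis using True
        by (simp add: ennreal_mult' prod_ennreal)
    qed (simp)
  qed
  also have "\<dots> = ennreal (exp (g * t)) * (\<integral>\<^sup>+ E. (\<Prod>i<n. ennreal (exp (- g * E i))) \<partial>PiM {..<n} M')"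
    unfolding M'_def by (rule nn_integral_cmult) measurable
  also have "(\<integral>\<^sup>+ E. (\<Prod>i<n. ennreal (exp (- g * E i))) \<partial>PiM {..<n} M') = (\<Prod>i<n. integral\<^sup>N (M' i) (\<lambda>x. ennreal (exp (- g * x))))"
    by (rule product_nn_integral_prod) (auto simp: M'_def)
  also have "\<dots> = (\<Prod>i<n. ennreal (l i / (l i + g)))"
    by (intro prod.cong refl) (use l g exp_laplace in \<open>auto simp: M'_def\<close>)
  also have "\<dots> = ennreal (\<Prod>i<n. l i / (l i + g))"
    using l g by (subst prod_ennreal) (auto, smt (verit) divide_nonneg_pos l)
  finally have "emeasure (PiM {..<n} M') X \<le> ennreal (exp (g * t)) * ennreal (\<Prod>i<n. l i / (l i + g))" .
  then have em: "emeasure (PiM {..<n} M') X \<le> ennreal (exp (g * t) * (\<Prod>i<n. l i / (l i + g)))"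
    by (simp add: ennreal_mult')
  have "measure (PiM {..<n} M') X \<le> exp (g * t) * (\<Prod>i<n. l i / (l i + g))"
    if "emeasure (PiM {..<n} M') X \<le> ennreal (exp (g * t) * (\<Prod>i<n. l i / (l i + g)))" for X
  proof -
    have "0 \<le> exp (g * t) * (\<Prod>i<n. l i / (l i + g))"
      using l g by (intro mult_nonneg_nonneg prod_nonneg) (auto, smt (verit) divide_nonneg_pos l)
    then show ?thesis using that by (simp add: P.emeasure_eq_measure ennreal_le_iff)
  qed
  then have "measure (PiM {..<n} M') X \<le> exp (g * t) * (\<Prod>i<n. l i / (l i + g))" using em by blast
  then show "measure (\<Pi>\<^sub>M i\<in>{..<n}. density lborel (exponential_density (l i)))
           {E \<in> space (\<Pi>\<^sub>M i\<in>{..<n}. density lborel (exponential_density (l i))). (\<Sum>i<n. E i) < t}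
         \<le> exp (g * t) * (\<Prod>i<n. l i / (l i + g))" by (simp add: eq X_def)
  show "measure (\<Pi>\<^sub>M i\<in>{..<n}. density lborel (exponential_density (l i)))
           {E \<in> space (\<Pi>\<^sub>M i\<in>{..<n}. density lborel (exponential_density (l i))). (\<Sum>i<n. E i) < t} \<le> 1"
    by (simp add: eq P.prob_le_1)
qed



fun W :: "('a \<Rightarrow> 'a \<Rightarrow> real) \<Rightarrow> 'a list \<Rightarrow> real" where
  "W p (x # y # ys) = p x y * W p (y # ys)"
| "W p _ = 1"

lemma W_prod: "W p xs = (\<Prod>i<length xs - 1. p (xs!i) (xs!Suc i))"
proof (induction p xs rule: W.induct)
  case (1 p x y ys)
  then show ?case by (simp add: prod.lessThan_Suc_shift del: prod.lessThan_Suc)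
qed auto

lemma W_append: "xs \<noteq> [] \<Longrightarrow> W p (xs @ y # ys) = W p (xs @ [y]) * W p (y # ys)"
proof (induction xs)
  case (Cons a xs)
  then show ?case by (cases xs) auto
qed simp

lemma W_snoc: "xs \<noteq> [] \<Longrightarrow> W p (xs @ [y]) = W p xs * p (last xs) y"
proof (induction xs)
  case (Cons a xs)
  then show ?case by (cases xs) auto
qed simp

lemma W_nonneg: "(\<And>x y. x \<in> V \<Longrightarrow> y \<in> V \<Longrightarrow> 0 \<le> p x y) \<Longrightarrow> set xs \<subseteq> V \<Longrightarrow> 0 \<le> W p xs"
  by (induction p xs rule: W.induct) auto

lemma W_map: "W p (map h xs) = W (\<lambda>x y. p (h x) (h y)) xs"
  by (induction "\<lambda>x y. p (h x) (h y)" xs rule: W.induct) auto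

lemma W_split: "k < length xs \<Longrightarrow> W p xs = W p (take (Suc k) xs) * W p (drop k xs)"
proof (cases k)
  case 0
  assume "k < length xs"
  then show ?thesis using 0 by (cases xs) auto
next
  case (Suc k')
  assume k: "k < length xs"
  have xs: "xs = take k xs @ xs ! k # drop (Suc k) xs" using k by (simp add: id_take_nth_drop)
  have ne: "take k xs \<noteq> []" using k Suc by auto
  have "W p xs = W p (take k xs @ [xs ! k]) * W p (xs ! k # drop (Suc k) xs)"
    by (subst xs, rule W_append[OF ne])
  also have "take k xs @ [xs ! k] = take (Suc k) xs" using k by (simp add: take_Suc_conv_app_nth)
  also have "xs ! k # drop (Suc k) xs = drop k xs" using k by (simp add: Cons_nth_drop_Suc)
  finally show ?thesis .
qed

lemma W_rev_snoc: "xs \<noteq> [] \<Longrightarrow> W p (rev (x # xs)) = W p (rev xs) * p (hd xs) x"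
  by (simp add: W_snoc last_rev)

lemma pf_le1:
  assumes fin: "finite V" and nn: "\<And>x y. x\<in>V \<Longrightarrow> y\<in>V \<Longrightarrow> 0 \<le> p x y"
    and sub: "\<And>x. x\<in>V \<Longrightarrow> (\<Sum>y\<in>V. p x y) \<le> 1"
  shows "x \<in> V \<Longrightarrow> \<forall>xs\<in>P. xs \<noteq> [] \<and> hd xs = x \<and> set xs \<subseteq> V \<and> length xs \<le> M
    \<Longrightarrow> \<forall>xs\<in>P. \<forall>zs. xs @ zs \<in> P \<longrightarrow> zs = [] \<Longrightarrow> sum (W p) P \<le> 1"
proof (induction M arbitrary: x P)
  case 0
  then have "P = {}" by auto
  then show ?case by simp
next
  case (Suc M)
  have finP: "finite P"
    by (rule finite_subset[OF _ finite_lists_length_le[OF fin, of "Suc M"]]) (use Suc.prems in auto)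
  show ?case
  proof (cases "[x] \<in> P")
    case True
    have "P = {[x]}"
    proof safe
      fix xs assume xs: "xs \<in> P"
      have e: "xs = [x] @ tl xs" using Suc.prems xs by (cases xs) auto
      then have "[x] @ tl xs \<in> P" using xs by simp
      then have "tl xs = []" using Suc.prems(3) True by blast
      then show "xs = [x]" using e by simp
    qed (use True in auto)
    then show ?thesis by simp
  next
    case False
    have form: "xs = x # hd (tl xs) # tl (tl xs)" if "xs \<in> P" for xs
      using Suc.prems that False by (cases xs; cases "tl xs") auto
    define Q where "Q y = {xs \<in> P. hd (tl xs) = y}" for y
    have "sum (W p) P = (\<Sum>xs\<in>P. p x (hd (tl xs)) * W p (tl xs))"
    proof (intro sum.cong refl)
      fix xs assume "xs \<in> P"
      then show "W p xs = p x (hd (tl xs)) * W p (tl xs)"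
        using form by (metis W.simps(1) list.sel(3))
    qed
    also have "\<dots> = (\<Sum>y\<in>V. \<Sum>xs\<in>Q y. p x (hd (tl xs)) * W p (tl xs))"
    proof -
      have "(\<lambda>xs. hd (tl xs)) ` P \<subseteq> V"
      proof
        fix y assume "y \<in> (\<lambda>xs. hd (tl xs)) ` P"
        then obtain xs where "xs \<in> P" "y = hd (tl xs)" by auto
        then show "y \<in> V" using form[of xs] Suc.prems(2) by (metis insert_subset list.set(2))
      qed
      then show ?thesis unfolding Q_def by (rule sum.group[OF finP fin, symmetric])
    qed
    also have "\<dots> \<le> (\<Sum>y\<in>V. p x y * 1)"
    proof (intro sum_mono)
      fix y assume y: "y \<in> V"
      have "(\<Sum>xs\<in>Q y. p x (hd (tl xs)) * W p (tl xs)) = p x y * (\<Sum>xs\<in>Q y. W p (tl xs))"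
        by (simp add: Q_def sum_distrib_left)
      also have "(\<Sum>xs\<in>Q y. W p (tl xs)) = sum (W p) (tl ` Q y)"
      proof (rule sum.reindex[symmetric, unfolded comp_def], rule inj_onI)
        fix a b assume "a \<in> Q y" "b \<in> Q y" "tl a = tl b"
        then show "a = b" using form unfolding Q_def by (metis (no_types, lifting) mem_Collect_eq)
      qed
      also have "sum (W p) (tl ` Q y) \<le> 1"
      proof (rule Suc.IH[OF y])
        show "\<forall>xs\<in>tl ` Q y. xs \<noteq> [] \<and> hd xs = y \<and> set xs \<subseteq> V \<and> length xs \<le> M"
        proof
          fix ys assume "ys \<in> tl ` Q y"
          then obtain xs where xs: "xs \<in> P" "hd (tl xs) = y" "ys = tl xs" by (auto simp: Q_def)
          have ys: "ys = y # tl (tl xs)" using xs(2,3) form[OF xs(1)] by (metis list.sel(3))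
          have hv: "set xs \<subseteq> V" "length xs \<le> Suc M" using Suc.prems(2) xs(1) by auto
          have xy: "xs = x # ys" using xs(3) form[OF xs(1)] by (metis list.sel(3))
          moreover have "set ys \<subseteq> set xs" "length xs = Suc (length ys)"
            using xy by auto
          ultimately show "ys \<noteq> [] \<and> hd ys = y \<and> set ys \<subseteq> V \<and> length ys \<le> M"
            using ys hv by auto
        qed
        show "\<forall>xs\<in>tl ` Q y. \<forall>zs. xs @ zs \<in> tl ` Q y \<longrightarrow> zs = []"
        proof (intro ballI allI impI)
          fix ys zs assume "ys \<in> tl ` Q y" "ys @ zs \<in> tl ` Q y"
          then obtain a b where ab: "a \<in> P" "b \<in> P" "ys = tl a" "ys @ zs = tl b" by (auto simp: Q_def)
          have "a = x # tl a" using form[OF ab(1)] by (metis list.sel(3))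
          moreover have "b = x # tl b" using form[OF ab(2)] by (metis list.sel(3))
          ultimately have "b = a @ zs" using ab(3,4) by (metis append_Cons)
          then show "zs = []" using Suc.prems(3) ab by blast
        qed
      qed
      then have "p x y * sum (W p) (tl ` Q y) \<le> p x y * 1"
        using nn[OF Suc.prems(1) y] by (intro mult_left_mono)
      finally show "(\<Sum>xs\<in>Q y. p x (hd (tl xs)) * W p (tl xs)) \<le> p x y * 1" .
    qed
    also have "\<dots> \<le> 1" using sub[OF Suc.prems(1)] by simp
    finally show ?thesis .
  qed
qed



lemma W_cong: "(\<And>x y. x \<in> set xs \<Longrightarrow> y \<in> set xs \<Longrightarrow> p x y = p' x y) \<Longrightarrow> W p xs = W p' xs"
  by (induction p xs rule: W.induct) auto

lemma path_weight_W: "path_weight R \<Omega> xs = W (jump_prob R \<Omega>) xs"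
  by (simp add: path_weight_def W_prod)

locale kchain =
  fixes \<Omega> :: "'a set" and R :: "'a \<Rightarrow> 'a \<Rightarrow> real" and \<nu> :: "'a \<Rightarrow> real"
    and A :: "'a set" and \<gamma> :: real and \<eta> :: 'a
  assumes finO: "finite \<Omega>" and Rnn: "\<And>x y. x \<in> \<Omega> \<Longrightarrow> y \<in> \<Omega> \<Longrightarrow> 0 \<le> R x y"
    and stat: "stationary R \<Omega> \<nu>" and nupos: "\<And>x. x \<in> \<Omega> \<Longrightarrow> 0 < \<nu> x"
    and A_sub: "A \<subseteq> \<Omega>" and gpos: "0 < \<gamma>" and etaO: "\<eta> \<in> \<Omega>"
begin

definition lam where "lam x = rate_out R \<Omega> x"
definition f where "f x y = R x y / (lam x + \<gamma>)"
definition q where "q u v = \<nu> v * R v u / (\<nu> u * (lam u + \<gamma>))"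

lemma lam_nn: "x \<in> \<Omega> \<Longrightarrow> 0 \<le> lam x"
  unfolding lam_def rate_out_def by (auto intro!: sum_nonneg Rnn)

lemma lamg_pos: "x \<in> \<Omega> \<Longrightarrow> 0 < lam x + \<gamma>"
  using lam_nn gpos by (simp add: add_nonneg_pos)

lemma f_nn: "x \<in> \<Omega> \<Longrightarrow> y \<in> \<Omega> \<Longrightarrow> 0 \<le> f x y"
  unfolding f_def using Rnn lamg_pos by (simp add: less_imp_le)

lemma f_sub: "x \<in> \<Omega> \<Longrightarrow> (\<Sum>y\<in>\<Omega>. f x y) \<le> 1"
proof -
  assume x: "x \<in> \<Omega>"
  have "(\<Sum>y\<in>\<Omega>. f x y) = lam x / (lam x + \<gamma>)"
    unfolding f_def lam_def rate_out_def by (simp add: sum_divide_distrib)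
  also have "\<dots> \<le> 1" using lamg_pos[OF x] gpos by simp
  finally show ?thesis .
qed

lemma q_nn: "x \<in> \<Omega> \<Longrightarrow> y \<in> \<Omega> \<Longrightarrow> 0 \<le> q x y"
  unfolding q_def using Rnn[of y x] lamg_pos[of x] nupos[of x] nupos[of y]
  by (intro divide_nonneg_pos mult_nonneg_nonneg mult_pos_pos) auto

lemma q_sub: "x \<in> \<Omega> \<Longrightarrow> (\<Sum>y\<in>\<Omega>. q x y) \<le> 1"
proof -
  assume x: "x \<in> \<Omega>"
  have "(\<Sum>y\<in>\<Omega>. q x y) = (\<Sum>y\<in>\<Omega>. \<nu> y * R y x) / (\<nu> x * (lam x + \<gamma>))"
    unfolding q_def by (simp add: sum_divide_distrib)
  also have "(\<Sum>y\<in>\<Omega>. \<nu> y * R y x) = \<nu> x * lam x"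
    using stat x unfolding stationary_def lam_def by auto
  also have "\<nu> x * lam x / (\<nu> x * (lam x + \<gamma>)) \<le> 1"
  proof -
    have "\<nu> x * lam x \<le> \<nu> x * (lam x + \<gamma>)" using nupos[OF x] gpos by simp
    then show ?thesis using lamg_pos[OF x] nupos[OF x] by (simp add: divide_le_eq_1_pos)
  qed
  finally show ?thesis .
qed

lemma Wf_nn: "set xs \<subseteq> \<Omega> \<Longrightarrow> 0 \<le> W f xs"
  by (rule W_nonneg[OF f_nn])

lemma Wq_nn: "set xs \<subseteq> \<Omega> \<Longrightarrow> 0 \<le> W q xs"
  by (rule W_nonneg[OF q_nn])

lemma fin_lists: "finite {xs. set xs \<subseteq> \<Omega> \<and> length xs \<le> M}"
  by (rule finite_lists_length_le[OF finO])

definition Hit where "Hit M = {xs. xs \<noteq> [] \<and> set xs \<subseteq> \<Omega> \<and> length xs \<le> M \<and> xs!0 = \<eta> \<and>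
   xs!(length xs - 1) \<in> A \<and> (\<forall>i<length xs - 1. xs!i \<notin> A)}"
definition Loop where "Loop M = {xs. xs \<noteq> [] \<and> set xs \<subseteq> \<Omega> \<and> length xs \<le> M \<and> xs!0 = \<eta> \<and>
   xs!(length xs - 1) = \<eta> \<and> (\<forall>i<length xs. xs!i \<notin> A)}"
definition Suf where "Suf M = {xs. xs \<noteq> [] \<and> set xs \<subseteq> \<Omega> \<and> length xs \<le> M \<and> xs!0 = \<eta> \<and>
   xs!(length xs - 1) \<in> A \<and> (\<forall>i<length xs - 1. xs!i \<notin> A \<and> (0 < i \<longrightarrow> xs!i \<noteq> \<eta>))}"
definition Exc where "Exc M = {xs. 2 \<le> length xs \<and> set xs \<subseteq> \<Omega> \<and> length xs \<le> M \<and> xs!0 = \<eta> \<and>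
   xs!(length xs - 1) = \<eta> \<and> (\<forall>i<length xs. xs!i \<notin> A) \<and> (\<forall>i. 0 < i \<and> i < length xs - 1 \<longrightarrow> xs!i \<noteq> \<eta>)}"
definition Z where "Z y M = {zs. zs \<noteq> [] \<and> set zs \<subseteq> \<Omega> \<and> length zs \<le> M \<and> zs!0 = y \<and>
   zs!(length zs - 1) = \<eta> \<and> (\<forall>i<length zs. zs!i \<notin> A) \<and> (\<forall>i<length zs - 1. zs!i \<noteq> \<eta>)}"

lemma fin_Hit: "finite (Hit M)" by (rule finite_subset[OF _ fin_lists]) (auto simp: Hit_def)
lemma fin_Loop: "finite (Loop M)" by (rule finite_subset[OF _ fin_lists]) (auto simp: Loop_def)
lemma fin_Suf: "finite (Suf M)" by (rule finite_subset[OF _ fin_lists]) (auto simp: Suf_def)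
lemma fin_Exc: "finite (Exc M)" by (rule finite_subset[OF _ fin_lists]) (auto simp: Exc_def)
lemma fin_Z: "finite (Z y M)" by (rule finite_subset[OF _ fin_lists]) (auto simp: Z_def)

lemma sum_Wf_nn: "(\<And>xs. xs \<in> X \<Longrightarrow> set xs \<subseteq> \<Omega>) \<Longrightarrow> 0 \<le> sum (W f) X"
  by (auto intro!: sum_nonneg Wf_nn)

lemma hit_decomp: assumes etaA: "\<eta> \<notin> A" shows "sum (W f) (Hit M) \<le> sum (W f) (Loop M) * sum (W f) (Suf M)"
proof -
  define K where "K xs = Max {i. i < length xs \<and> xs!i = \<eta>}" for xs :: "'a list"
  have KP: "K xs < length xs - 1 \<and> xs ! K xs = \<eta> \<and> (\<forall>j. K xs < j \<and> j < length xs \<longrightarrow> xs!j \<noteq> \<eta>)"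
    if xs: "xs \<in> Hit M" for xs
  proof -
    have fin: "finite {i. i < length xs \<and> xs!i = \<eta>}" by simp
    have ne: "0 \<in> {i. i < length xs \<and> xs!i = \<eta>}" using xs by (auto simp: Hit_def)
    have K1: "K xs \<in> {i. i < length xs \<and> xs!i = \<eta>}" unfolding K_def using fin ne
      by (intro Max_in) auto
    have K2: "j \<le> K xs" if "j < length xs" "xs!j = \<eta>" for j
      unfolding K_def using fin that by (intro Max_ge) auto
    have "K xs \<noteq> length xs - 1" using K1 xs etaA by (auto simp: Hit_def)
    then show ?thesis using K1 K2 by (auto simp: not_le[symmetric])
  qed
  define g where "g xs = (take (Suc (K xs)) xs, drop (K xs) xs)" for xs :: "'a list"
  have rec: "fst (g xs) @ tl (snd (g xs)) = xs" for xs
    by (simp add: g_def tl_drop drop_Suc[symmetric])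
  have inj: "inj_on g (Hit M)"
    by (rule inj_onI) (metis rec)
  have gmem: "g xs \<in> Loop M \<times> Suf M" if xs: "xs \<in> Hit M" for xs
  proof -
    note KP[OF xs]
    have H: "xs \<noteq> []" "set xs \<subseteq> \<Omega>" "length xs \<le> M" "xs!0 = \<eta>" "xs!(length xs - 1) \<in> A"
      "\<forall>i<length xs - 1. xs!i \<notin> A" using xs by (auto simp: Hit_def)
    have "take (Suc (K xs)) xs \<in> Loop M"
      unfolding Loop_def using H KP[OF xs] set_take_subset[of "Suc (K xs)" xs]
      by (auto simp: min_def)
    moreover have "drop (K xs) xs \<in> Suf M"
    proof -
      have "set (drop (K xs) xs) \<subseteq> \<Omega>" using H set_drop_subset[of "K xs" xs] by auto
      moreover have "\<forall>i<length xs - K xs - 1. xs ! (K xs + i) \<notin> A \<and> (0 < i \<longrightarrow> xs ! (K xs + i) \<noteq> \<eta>)"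
        using H KP[OF xs] by auto
      moreover have "xs ! (K xs + (length xs - K xs - 1)) = xs!(length xs - 1)"
      proof -
        have "K xs + (length xs - K xs - 1) = length xs - 1" using KP[OF xs] by linarith
        then show ?thesis by simp
      qed
      ultimately show ?thesis
        unfolding Suf_def using H KP[OF xs] by auto
    qed
    ultimately show ?thesis by (simp add: g_def)
  qed
  have "sum (W f) (Hit M) = (\<Sum>xs\<in>Hit M. (\<lambda>(l, s). W f l * W f s) (g xs))"
  proof (intro sum.cong refl)
    fix xs assume "xs \<in> Hit M"
    then have "K xs < length xs" using KP by fastforce
    then show "W f xs = (\<lambda>(l, s). W f l * W f s) (g xs)"
      by (simp add: g_def W_split[symmetric])
  qed
  also have "\<dots> = sum (\<lambda>(l, s). W f l * W f s) (g ` Hit M)"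
    by (rule sum.reindex[OF inj, symmetric, unfolded comp_def])
  also have "\<dots> \<le> sum (\<lambda>(l, s). W f l * W f s) (Loop M \<times> Suf M)"
  proof (rule sum_mono2)
    show "finite (Loop M \<times> Suf M)" using fin_Loop fin_Suf by simp
    show "g ` Hit M \<subseteq> Loop M \<times> Suf M" using gmem by blast
    show "0 \<le> (\<lambda>(l, s). W f l * W f s) b" if "b \<in> Loop M \<times> Suf M - g ` Hit M" for b
      using that by (auto simp: Loop_def Suf_def intro!: mult_nonneg_nonneg Wf_nn)
  qed
  also have "\<dots> = sum (W f) (Loop M) * sum (W f) (Suf M)"
    by (simp add: sum_product sum.cartesian_product)
  finally show ?thesis .
qed

lemma loop_decomp: "sum (W f) (Loop M) \<le> 1 + sum (W f) (Exc M) * sum (W f) (Loop M)"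
proof -
  define L1 where "L1 = {xs \<in> Loop M. length xs < 2}"
  define L2 where "L2 = {xs \<in> Loop M. 2 \<le> length xs}"
  have split: "Loop M = L1 \<union> L2" "L1 \<inter> L2 = {}" by (auto simp: L1_def L2_def)
  have fin1: "finite L1" "finite L2" using fin_Loop by (auto simp: L1_def L2_def)
  have "L1 \<subseteq> {[\<eta>]}"
  proof
    fix xs assume "xs \<in> L1"
    then have "xs \<noteq> []" "length xs < 2" "xs!0 = \<eta>" by (auto simp: L1_def Loop_def)
    then show "xs \<in> {[\<eta>]}" by (cases xs) auto
  qed
  then have "L1 = {} \<or> L1 = {[\<eta>]}" by (rule subset_singletonD)
  then have s1: "sum (W f) L1 \<le> 1" by auto
  define K where "K xs = Min {i. 0 < i \<and> i < length xs \<and> xs!i = \<eta>}" for xs :: "'a list"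
  have KP: "0 < K xs \<and> K xs < length xs \<and> xs ! K xs = \<eta> \<and> (\<forall>j. 0 < j \<and> j < K xs \<longrightarrow> xs!j \<noteq> \<eta>)"
    if xs: "xs \<in> L2" for xs
  proof -
    have fin: "finite {i. 0 < i \<and> i < length xs \<and> xs!i = \<eta>}" by simp
    have ne: "length xs - 1 \<in> {i. 0 < i \<and> i < length xs \<and> xs!i = \<eta>}" using xs by (auto simp: L2_def Loop_def)
    have K1: "K xs \<in> {i. 0 < i \<and> i < length xs \<and> xs!i = \<eta>}" unfolding K_def using fin ne
      by (intro Min_in) auto
    have K2: "K xs \<le> j" if "0 < j" "j < length xs" "xs!j = \<eta>" for j
      unfolding K_def using fin that by (intro Min_le) auto
    have "xs!j \<noteq> \<eta>" if "0 < j" "j < K xs" for j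
    proof
      assume "xs!j = \<eta>"
      moreover have "j < length xs" using that K1 by simp
      ultimately have "K xs \<le> j" using K2 that(1) by blast
      then show False using that(2) by simp
    qed
    then show ?thesis using K1 by blast
  qed
  define g where "g xs = (take (Suc (K xs)) xs, drop (K xs) xs)" for xs :: "'a list"
  have rec: "fst (g xs) @ tl (snd (g xs)) = xs" for xs
    by (simp add: g_def tl_drop drop_Suc[symmetric])
  have inj: "inj_on g L2"
    by (rule inj_onI) (metis rec)
  have gmem: "g xs \<in> Exc M \<times> Loop M" if xs: "xs \<in> L2" for xs
  proof -
    have H: "2 \<le> length xs" "set xs \<subseteq> \<Omega>" "length xs \<le> M" "xs!0 = \<eta>" "xs!(length xs - 1) = \<eta>"
      "\<forall>i<length xs. xs!i \<notin> A" using xs by (auto simp: L2_def Loop_def)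
    have "take (Suc (K xs)) xs \<in> Exc M"
      unfolding Exc_def using H KP[OF xs] set_take_subset[of "Suc (K xs)" xs]
      by (auto simp: min_def)
    moreover have "drop (K xs) xs \<in> Loop M"
    proof -
      have "set (drop (K xs) xs) \<subseteq> \<Omega>" using H set_drop_subset[of "K xs" xs] by auto
      moreover have "\<forall>i<length xs - K xs. xs ! (K xs + i) \<notin> A"
        using H KP[OF xs] by auto
      moreover have "xs ! (K xs + (length xs - K xs - 1)) = xs!(length xs - 1)"
      proof -
        have "K xs + (length xs - K xs - 1) = length xs - 1" using KP[OF xs] by linarith
        then show ?thesis by simp
      qed
      ultimately show ?thesis
        unfolding Loop_def using H KP[OF xs] by auto
    qed
    ultimately show ?thesis by (simp add: g_def)
  qed
  have "sum (W f) L2 = (\<Sum>xs\<in>L2. (\<lambda>(l, s). W f l * W f s) (g xs))"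
  proof (intro sum.cong refl)
    fix xs assume "xs \<in> L2"
    then have "K xs < length xs" using KP by fastforce
    then show "W f xs = (\<lambda>(l, s). W f l * W f s) (g xs)"
      by (simp add: g_def W_split[symmetric])
  qed
  also have "\<dots> = sum (\<lambda>(l, s). W f l * W f s) (g ` L2)"
    by (rule sum.reindex[OF inj, symmetric, unfolded comp_def])
  also have "\<dots> \<le> sum (\<lambda>(l, s). W f l * W f s) (Exc M \<times> Loop M)"
  proof (rule sum_mono2)
    show "finite (Exc M \<times> Loop M)" using fin_Loop fin_Exc by simp
    show "g ` L2 \<subseteq> Exc M \<times> Loop M" using gmem by blast
    show "0 \<le> (\<lambda>(l, s). W f l * W f s) b" if "b \<in> Exc M \<times> Loop M - g ` L2" for b
      using that by (auto simp: Loop_def Exc_def intro!: mult_nonneg_nonneg Wf_nn)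
  qed
  also have "\<dots> = sum (W f) (Exc M) * sum (W f) (Loop M)"
    by (simp add: sum_product sum.cartesian_product)
  finally have s2: "sum (W f) L2 \<le> sum (W f) (Exc M) * sum (W f) (Loop M)" .
  have "sum (W f) (Loop M) = sum (W f) L1 + sum (W f) L2"
    unfolding split(1) by (rule sum.union_disjoint[OF fin1 split(2)])
  then show ?thesis using s1 s2 by linarith
qed

lemma Z_le1: "y \<in> \<Omega> \<Longrightarrow> sum (W q) (Z y M) \<le> 1"
proof (rule pf_le1[OF finO q_nn q_sub])
  assume y: "y \<in> \<Omega>"
  then show "y \<in> \<Omega>" .
  show "\<forall>xs\<in>Z y M. xs \<noteq> [] \<and> hd xs = y \<and> set xs \<subseteq> \<Omega> \<and> length xs \<le> M"
    by (auto simp: Z_def hd_conv_nth)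
  show "\<forall>xs\<in>Z y M. \<forall>zs. xs @ zs \<in> Z y M \<longrightarrow> zs = []"
  proof (intro ballI allI impI)
    fix xs zs assume a: "xs \<in> Z y M" "xs @ zs \<in> Z y M"
    show "zs = []"
    proof (rule ccontr)
      assume "zs \<noteq> []"
      moreover have "xs \<noteq> []" using a(1) by (simp add: Z_def)
      ultimately have "length xs - 1 < length (xs @ zs) - 1" by (cases xs; cases zs) auto
      then have "(xs @ zs) ! (length xs - 1) \<noteq> \<eta>" using a(2) by (auto simp: Z_def)
      moreover have "(xs @ zs) ! (length xs - 1) = xs ! (length xs - 1)" using a(1)
        by (auto simp: Z_def nth_append)
      ultimately show False using a(1) by (auto simp: Z_def)
    qed
  qed
qed

lemma rev_id: "zs \<noteq> [] \<Longrightarrow> set zs \<subseteq> \<Omega> \<Longrightarrow>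
  \<nu> (hd zs) * (lam (hd zs) + \<gamma>) * W f zs = \<nu> (last zs) * (lam (last zs) + \<gamma>) * W q (rev zs)"
proof (induction zs)
  case (Cons x zs)
  show ?case
  proof (cases "zs = []")
    case True
    then show ?thesis by simp
  next
    case False
    define h where "h = hd zs"
    have zs: "zs = h # tl zs" using False by (simp add: h_def)
    have x: "x \<in> \<Omega>" and h: "h \<in> \<Omega>" using Cons.prems zs by (auto, metis insert_subset list.set(2))
    have IH: "\<nu> h * (lam h + \<gamma>) * W f zs = \<nu> (last zs) * (lam (last zs) + \<gamma>) * W q (rev zs)"
      using Cons False by (simp add: h_def)
    have Wf: "W f (x # zs) = f x h * W f zs" by (subst zs, simp, subst zs, simp)
    have Wq: "W q (rev zs @ [x]) = W q (rev zs) * q h x"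
      using W_rev_snoc[OF False] by (simp add: h_def)
    have "\<nu> x * (lam x + \<gamma>) * W f (x # zs) = \<nu> x * R x h * W f zs"
      using lamg_pos[OF x] by (simp add: Wf f_def)
    also have "\<dots> = (\<nu> h * (lam h + \<gamma>) * W f zs) * q h x"
    proof -
      have nz: "\<nu> h * (lam h + \<gamma>) \<noteq> 0" using lamg_pos[OF h] nupos[OF h] by simp
      have alg: "(d::real) \<noteq> 0 \<Longrightarrow> d * w * (n / d) = n * w" for d w n by (simp add: field_simps)
      show ?thesis unfolding q_def using alg[OF nz, of "W f zs" "\<nu> x * R x h"] by simp
    qed
    also have "\<dots> = \<nu> (last zs) * (lam (last zs) + \<gamma>) * W q (rev (x # zs))"
      by (subst IH, subst rev.simps(2), subst Wq, simp add: mult.assoc)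
    finally show ?thesis using False by simp
  qed
qed simp

definition E where "E = (\<Sum>y\<in>\<Omega>. \<nu> y * (if y \<notin> A then (\<Sum>a\<in>A. R y a) else 0))"

lemma suf_bound: assumes etaA: "\<eta> \<notin> A" shows "\<nu> \<eta> * (lam \<eta> + \<gamma>) * sum (W f) (Suf M) \<le> E"
proof -
  define G where "G xs = (last (butlast xs), last xs, rev (butlast xs))" for xs :: "'a list"
  define h where "h = (\<lambda>(y, a, zs). \<nu> y * R y a * W q zs)"
  define T where "T = Sigma (\<Omega> - A) (\<lambda>y. A \<times> Z y M)"
  have inj: "inj_on G (Suf M)"
  proof (rule inj_onI)
    fix xs ys assume "G xs = G ys" "xs \<in> Suf M" "ys \<in> Suf M"
    then have "rev (butlast xs) = rev (butlast ys)" "last xs = last ys" unfolding G_def by simp_all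
    moreover have "xs \<noteq> []" "ys \<noteq> []" using \<open>xs \<in> Suf M\<close> \<open>ys \<in> Suf M\<close> by (auto simp: Suf_def)
    ultimately show "xs = ys" by (metis append_butlast_last_id rev_rev_ident)
  qed
  have props: "butlast xs \<noteq> [] \<and> G xs \<in> T \<and> \<nu> \<eta> * (lam \<eta> + \<gamma>) * W f xs = h (G xs)"
    if xs: "xs \<in> Suf M" for xs
  proof -
    have H: "xs \<noteq> []" "set xs \<subseteq> \<Omega>" "length xs \<le> M" "xs!0 = \<eta>" "xs!(length xs - 1) \<in> A"
      "\<forall>i<length xs - 1. xs!i \<notin> A \<and> (0 < i \<longrightarrow> xs!i \<noteq> \<eta>)" using xs by (auto simp: Suf_def)
    have len: "2 \<le> length xs"
    proof (rule ccontr)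
      assume "\<not> 2 \<le> length xs"
      moreover have "0 < length xs" using H(1) by simp
      ultimately have "length xs = 1" by linarith
      then show False using H(4,5) etaA by simp
    qed
    define zs where "zs = butlast xs"
    define a where "a = last xs"
    have xsz: "xs = zs @ [a]" using H(1) by (simp add: zs_def a_def)
    have lz: "length zs = length xs - 1" by (simp add: zs_def)
    have "0 < length zs" using lz len by linarith
    then have zne: "zs \<noteq> []" by auto
    have znth: "zs ! i = xs ! i" if "i < length zs" for i using that by (simp add: zs_def nth_butlast)
    have aA: "a \<in> A" using H(1,5) by (simp add: a_def last_conv_nth)
    have zsO: "set zs \<subseteq> \<Omega>" using H(2) by (simp add: zs_def) (meson in_set_butlastD subset_iff)
    have hdz: "hd zs = \<eta>" using zne znth H(4) by (simp add: hd_conv_nth)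
    define y where "y = last zs"
    have yx: "y = xs ! (length zs - 1)" using zne znth by (simp add: y_def last_conv_nth)
    have yO: "y \<in> \<Omega>" using zne zsO y_def by auto
    have "length zs - 1 < length xs - 1" using lz len zne by (cases zs) auto
    then have yA: "y \<notin> A" using H(6) yx by auto
    have Zm: "rev zs \<in> Z y M"
    proof -
      have "\<forall>i<length zs. rev zs ! i \<notin> A"
        using H(6) lz znth by (auto simp: rev_nth)
      moreover have "\<forall>i<length zs - 1. rev zs ! i \<noteq> \<eta>"
      proof (intro allI impI)
        fix i assume i: "i < length zs - 1"
        then have "rev zs ! i = xs ! (length zs - Suc i)" using znth by (simp add: rev_nth)
        moreover have "0 < length zs - Suc i" "length zs - Suc i < length xs - 1" using i lz by auto
        ultimately show "rev zs ! i \<noteq> \<eta>" using H(6) by auto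
      qed
      moreover have "rev zs ! 0 = y" using zne by (simp add: rev_nth y_def last_conv_nth)
      moreover have "rev zs ! (length zs - 1) = \<eta>" using zne hdz by (simp add: rev_nth hd_conv_nth)
      moreover have "length zs \<le> M" using lz H(3) by simp
      ultimately show ?thesis using zne zsO by (auto simp: Z_def)
    qed
    have "\<nu> \<eta> * (lam \<eta> + \<gamma>) * W f xs = \<nu> \<eta> * (lam \<eta> + \<gamma>) * W f zs * f y a"
      by (simp add: xsz W_snoc[OF zne] y_def)
    also have "\<dots> = \<nu> y * (lam y + \<gamma>) * W q (rev zs) * f y a"
      using rev_id[OF zne zsO] hdz by (simp add: y_def)
    also have "\<dots> = \<nu> y * R y a * W q (rev zs)"
      using lamg_pos[OF yO] by (simp add: f_def)
    finally show ?thesis using zne yO yA aA Zm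
      by (simp add: G_def T_def h_def zs_def[symmetric] a_def[symmetric] y_def[symmetric])
  qed
  have finT: "finite T" unfolding T_def using finO A_sub fin_Z
    by (intro finite_SigmaI finite_cartesian_product) (auto intro: finite_subset)
  have "\<nu> \<eta> * (lam \<eta> + \<gamma>) * sum (W f) (Suf M) = (\<Sum>xs\<in>Suf M. h (G xs))"
    by (simp add: sum_distrib_left props)
  also have "\<dots> = sum h (G ` Suf M)"
    by (rule sum.reindex[OF inj, symmetric, unfolded comp_def])
  also have "\<dots> \<le> sum h T"
  proof (rule sum_mono2[OF finT])
    show "G ` Suf M \<subseteq> T" using props by blast
    show "0 \<le> h b" if "b \<in> T - G ` Suf M" for b
      using that A_sub by (auto simp: T_def h_def Z_def intro!: mult_nonneg_nonneg Wq_nn Rnn less_imp_le[OF nupos])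
  qed
  also have "sum h T = (\<Sum>y\<in>\<Omega> - A. \<Sum>p\<in>A \<times> Z y M. h (y, p))"
    unfolding T_def using finO A_sub fin_Z
    using finite_subset[OF A_sub finO] by (subst sum.Sigma) auto
  also have "\<dots> = (\<Sum>y\<in>\<Omega> - A. \<Sum>a\<in>A. \<nu> y * R y a * sum (W q) (Z y M))"
    by (simp add: h_def sum.cartesian_product[symmetric] sum_distrib_left)
  also have "\<dots> \<le> (\<Sum>y\<in>\<Omega> - A. \<Sum>a\<in>A. \<nu> y * R y a * 1)"
  proof (intro sum_mono mult_left_mono)
    fix y a assume "y \<in> \<Omega> - A" "a \<in> A"
    then have y: "y \<in> \<Omega>" "a \<in> \<Omega>" using A_sub by auto
    then show "sum (W q) (Z y M) \<le> 1" using Z_le1 by auto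
    have "0 \<le> \<nu> y" using nupos[OF y(1)] by simp
    then show "0 \<le> \<nu> y * R y a" using Rnn[OF y] by simp
  qed
  also have "\<dots> = E"
  proof -
    have "E = (\<Sum>y\<in>\<Omega>. if y \<notin> A then \<nu> y * (\<Sum>a\<in>A. R y a) else 0)"
      unfolding E_def by (intro sum.cong) auto
    also have "\<dots> = (\<Sum>y\<in>\<Omega> - A. \<nu> y * (\<Sum>a\<in>A. R y a))"
      using finO by (simp add: sum.If_cases Diff_eq Compl_eq)
    finally show ?thesis by (simp add: sum_distrib_left)
  qed
  finally show ?thesis .
qed

lemma E_nn: "0 \<le> E"
  unfolding E_def using A_sub by (auto intro!: sum_nonneg mult_nonneg_nonneg Rnn less_imp_le[OF nupos])

end


lemma jp_nn: "(\<And>z w. z \<in> V \<Longrightarrow> w \<in> V \<Longrightarrow> 0 \<le> Q z w) \<Longrightarrow> z \<in> V \<Longrightarrow> w \<in> V \<Longrightarrow> 0 \<le> jump_prob Q V z w"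
  unfolding jump_prob_def rate_out_def by (intro divide_nonneg_nonneg sum_nonneg) auto

lemma jp_sub: "(\<Sum>w\<in>V. jump_prob Q V z w) \<le> 1"
  unfolding jump_prob_def rate_out_def sum_divide_distrib[symmetric] by (cases "sum (Q z) V = 0") auto

context kchain
begin

abbreviation "V' \<equiv> enl_space \<Omega>"
abbreviation "Rs \<equiv> enl_rates R \<gamma>"
abbreviation "p' \<equiv> jump_prob Rs V'"
abbreviation "B' \<equiv> Inr ` \<Omega>"

definition esc_e where "esc_e n = (\<Sum>xs\<in>esc_paths V' B' (Inl \<eta>) (Suc n). path_weight Rs V' xs)"
definition esc where "esc = escape_prob Rs V' B' (Inl \<eta>)"

lemma esc_eq: "esc = suminf esc_e"
  by (simp add: esc_def escape_prob_def esc_e_def[abs_def])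

lemma finV': "finite V'" using finO by (simp add: enl_space_def)

lemma rs_nn: "z \<in> V' \<Longrightarrow> w \<in> V' \<Longrightarrow> 0 \<le> Rs z w"
  using gpos by (auto simp: enl_space_def intro: Rnn)

lemma ro_Inl: "x \<in> \<Omega> \<Longrightarrow> rate_out Rs V' (Inl x) = lam x + \<gamma>"
proof -
  assume x: "x \<in> \<Omega>"
  have "rate_out Rs V' (Inl x) = sum (Rs (Inl x)) (Inl ` \<Omega>) + sum (Rs (Inl x)) (Inr ` \<Omega>)"
    unfolding rate_out_def enl_space_def using finO by (intro sum.union_disjoint) auto
  also have "sum (Rs (Inl x)) (Inl ` \<Omega>) = (\<Sum>y\<in>\<Omega>. R x y)"
    by (subst sum.reindex) (auto simp: inj_on_def)
  also have "sum (Rs (Inl x)) (Inr ` \<Omega>) = (\<Sum>y\<in>\<Omega>. if x = y then \<gamma> else 0)"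
    by (subst sum.reindex) (auto simp: inj_on_def)
  also have "\<dots> = \<gamma>" using x finO by simp
  finally show ?thesis by (simp add: lam_def rate_out_def)
qed

lemma p'_nn: "z \<in> V' \<Longrightarrow> w \<in> V' \<Longrightarrow> 0 \<le> p' z w"
  by (rule jp_nn[OF rs_nn])

lemma p'_Inl: "x \<in> \<Omega> \<Longrightarrow> p' (Inl x) (Inl y) = f x y"
  by (simp add: jump_prob_def ro_Inl f_def)

lemma W_Inl: "set xs \<subseteq> \<Omega> \<Longrightarrow> W p' (map Inl xs) = W f xs"
  unfolding W_map by (rule W_cong) (auto simp: p'_Inl)

lemma fin_esc: "finite (esc_paths V' B' (Inl \<eta>) n)"
  by (rule finite_subset[OF _ finite_lists_length_le[OF finV', of "Suc n"]]) (auto simp: esc_paths_def)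

lemma esc_e_nn: "0 \<le> esc_e n"
  unfolding esc_e_def path_weight_W
  by (intro sum_nonneg W_nonneg[OF p'_nn]) (auto simp: esc_paths_def)

lemma esc_pf: "(\<Sum>n<K. esc_e n) + sum (W f) (Exc M) \<le> 1"
proof -
  define P1 where "P1 = (\<Union>n\<in>{..<K}. esc_paths V' B' (Inl \<eta>) (Suc n))"
  define P2 where "P2 = map (Inl :: 'a \<Rightarrow> 'a + 'a) ` Exc M"
  have Pm: "xs \<noteq> [] \<and> hd xs = Inl \<eta> \<and> set xs \<subseteq> V' \<and> length xs \<le> K + M + 1 \<and> 2 \<le> length xs \<and>
      (xs ! (length xs - 1) \<in> B' \<or> xs ! (length xs - 1) = Inl \<eta>) \<and>
      (\<forall>j. 1 \<le> j \<and> j < length xs - 1 \<longrightarrow> xs ! j \<notin> B' \<and> xs ! j \<noteq> Inl \<eta>)"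
    if "xs \<in> P1 \<union> P2" for xs
    using that
  proof
    assume "xs \<in> P1"
    then obtain n where n: "n < K" "xs \<in> esc_paths V' B' (Inl \<eta>) (Suc n)" by (auto simp: P1_def)
    then have "xs \<noteq> []" by (auto simp: esc_paths_def)
    with n show ?thesis by (auto simp: esc_paths_def hd_conv_nth)
  next
    assume "xs \<in> P2"
    then obtain us where us: "us \<in> Exc M" "xs = map Inl us" by (auto simp: P2_def)
    have "set us \<subseteq> \<Omega>" using us by (auto simp: Exc_def)
    then have "set xs \<subseteq> V'" using us by (auto simp: enl_space_def)
    moreover have "\<forall>j. 1 \<le> j \<and> j < length xs - 1 \<longrightarrow> xs ! j \<notin> B' \<and> xs ! j \<noteq> Inl \<eta>"
      using us by (auto simp: Exc_def)
    moreover have "us \<noteq> []" using us by (auto simp: Exc_def)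
    ultimately show ?thesis using us by (auto simp: Exc_def hd_conv_nth)
  qed
  have finP: "finite P1" "finite P2" using fin_esc fin_Exc by (auto simp: P1_def P2_def)
  have "sum (W p') (P1 \<union> P2) \<le> 1"
  proof (rule pf_le1[OF finV' p'_nn jp_sub])
    show "Inl \<eta> \<in> V'" using etaO by (simp add: enl_space_def)
    show "\<forall>xs\<in>P1 \<union> P2. xs \<noteq> [] \<and> hd xs = Inl \<eta> \<and> set xs \<subseteq> V' \<and> length xs \<le> K + M + 1"
      using Pm by blast
    show "\<forall>xs\<in>P1 \<union> P2. \<forall>zs. xs @ zs \<in> P1 \<union> P2 \<longrightarrow> zs = []"
    proof (intro ballI allI impI)
      fix xs zs assume a: "xs \<in> P1 \<union> P2" "xs @ zs \<in> P1 \<union> P2"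
      show "zs = []"
      proof (rule ccontr)
        assume "zs \<noteq> []"
        define j where "j = length xs - 1"
        have A1: "2 \<le> length xs" "xs ! j \<in> B' \<or> xs ! j = Inl \<eta>" using Pm[OF a(1)] by (auto simp: j_def)
        have "0 < length zs" using \<open>zs \<noteq> []\<close> by simp
        then have "1 \<le> j" "j < length (xs @ zs) - 1" using A1(1) unfolding j_def length_append by linarith+
        then have "(xs @ zs) ! j \<notin> B' \<and> (xs @ zs) ! j \<noteq> Inl \<eta>" using Pm[OF a(2)] by blast
        moreover have "j < length xs" using A1(1) unfolding j_def by linarith
        then have "(xs @ zs) ! j = xs ! j" by (simp add: nth_append)
        ultimately show False using A1(2) by simp
      qed
    qed
  qed
  moreover have "P1 \<inter> P2 = {}"
  proof -
    have "xs ! (length xs - 1) \<in> B'" if "xs \<in> P1" for xs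
      using that by (auto simp: P1_def esc_paths_def)
    moreover have "xs ! (length xs - 1) \<notin> B'" if "xs \<in> P2" for xs
    proof -
      obtain us where us: "us \<in> Exc M" "xs = map Inl us" using \<open>xs \<in> P2\<close> by (auto simp: P2_def)
      then have "length us \<ge> 2" by (auto simp: Exc_def)
      then show ?thesis using us by auto
    qed
    ultimately show ?thesis by blast
  qed
  then have "sum (W p') (P1 \<union> P2) = sum (W p') P1 + sum (W p') P2"
    using finP by (intro sum.union_disjoint) auto
  moreover have "sum (W p') P1 = (\<Sum>n<K. esc_e n)"
    unfolding P1_def esc_e_def path_weight_W
  proof (subst sum.UNION_disjoint)
    show "\<forall>i\<in>{..<K}. \<forall>j\<in>{..<K}. i \<noteq> j \<longrightarrow> esc_paths V' B' (Inl \<eta>) (Suc i) \<inter> esc_paths V' B' (Inl \<eta>) (Suc j) = {}"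
      by (auto simp: esc_paths_def)
  qed (auto simp: fin_esc)
  moreover have "sum (W p') P2 = sum (W f) (Exc M)"
    unfolding P2_def
  proof (subst sum.reindex)
    show "inj_on (map Inl) (Exc M)" by (rule inj_onI) (simp add: inj_map_eq_map inj_on_def)
    show "sum (W p' \<circ> map Inl) (Exc M) = sum (W f) (Exc M)"
      by (intro sum.cong refl) (auto simp: W_Inl Exc_def)
  qed
  ultimately show ?thesis by simp
qed

lemma esc_summable: "summable esc_e"
proof (rule summableI_nonneg_bounded[OF esc_e_nn])
  fix n show "sum esc_e {..<n} \<le> 1"
    using esc_pf[of n 0] sum_Wf_nn[of "Exc 0"] by (auto simp: Exc_def)
qed

lemma esc_le: "esc \<le> 1 - sum (W f) (Exc M)"
  unfolding esc_eq using esc_pf[of _ M] by (intro suminf_le_const[OF esc_summable]) (simp add: algebra_simps)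

lemma esc_pos: "0 < esc"
proof -
  have mem: "[Inl \<eta>, Inr \<eta>] \<in> esc_paths V' B' (Inl \<eta>) (Suc 0)"
    using etaO by (auto simp: esc_paths_def enl_space_def)
  have "path_weight Rs V' [Inl \<eta>, Inr \<eta>] = \<gamma> / (lam \<eta> + \<gamma>)"
    using etaO by (simp add: path_weight_W jump_prob_def ro_Inl)
  also have "\<dots> > 0" using gpos lamg_pos[OF etaO] by simp
  finally have "0 < path_weight Rs V' [Inl \<eta>, Inr \<eta>]" .
  also have "\<dots> \<le> esc_e 0" unfolding esc_e_def
    by (rule member_le_sum[OF mem _ fin_esc])
      (auto simp: path_weight_W esc_paths_def intro!: W_nonneg[OF p'_nn])
  also have "esc_e 0 \<le> esc" unfolding esc_eq
    using sum_le_suminf[OF esc_summable, of "{..<1}"] esc_e_nn by simp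
  finally show ?thesis .
qed

lemma cap_eq: "cap_star R \<Omega> \<nu> \<gamma> \<eta> = \<nu> \<eta> / 2 * (lam \<eta> + \<gamma>) * esc"
  by (simp add: cap_star_def capacity_def esc_def ro_Inl etaO)

lemma hit_bound: assumes etaA: "\<eta> \<notin> A" shows "sum (W f) (Hit M) * (\<nu> \<eta> * (lam \<eta> + \<gamma>) * esc) \<le> E"
proof -
  define L where "L = sum (W f) (Loop M)"
  define r where "r = sum (W f) (Exc M)"
  define a where "a = sum (W f) (Suf M)"
  define c where "c = \<nu> \<eta> * (lam \<eta> + \<gamma>)"
  have L0: "0 \<le> L" unfolding L_def by (rule sum_Wf_nn) (auto simp: Loop_def)
  have a0: "0 \<le> a" unfolding a_def by (rule sum_Wf_nn) (auto simp: Suf_def)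
  have h0: "0 \<le> sum (W f) (Hit M)" by (rule sum_Wf_nn) (auto simp: Hit_def)
  have c0: "0 < c" unfolding c_def using nupos[OF etaO] lamg_pos[OF etaO] by simp
  have hL: "sum (W f) (Hit M) \<le> L * a" unfolding L_def a_def by (rule hit_decomp[OF etaA])
  have Lr: "L \<le> 1 + r * L" unfolding L_def r_def by (rule loop_decomp)
  have er: "esc \<le> 1 - r" unfolding r_def by (rule esc_le)
  have ca: "c * a \<le> E" unfolding c_def a_def by (rule suf_bound[OF etaA])
  have "esc * L \<le> (1 - r) * L" using er L0 by (rule mult_right_mono)
  also have "\<dots> \<le> 1" using Lr by (simp add: algebra_simps)
  finally have eL: "esc * L \<le> 1" .
  have "sum (W f) (Hit M) * (c * esc) \<le> L * a * (c * esc)"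
    using hL c0 esc_pos by (intro mult_right_mono) auto
  also have "\<dots> = (esc * L) * (c * a)" by (simp add: algebra_simps)
  also have "\<dots> \<le> 1 * (c * a)" using eL c0 a0 by (intro mult_right_mono) auto
  also have "\<dots> \<le> E" using ca by simp
  finally show ?thesis by (simp add: c_def)
qed

end


lemma hit_len: "xs \<in> hit_paths \<Omega> B x n \<Longrightarrow> length xs = Suc n \<and> set xs \<subseteq> \<Omega>"
  by (simp add: hit_paths_def)

lemma fin_hit: "finite \<Omega> \<Longrightarrow> finite (hit_paths \<Omega> B x n)"
  by (rule finite_subset[OF _ finite_lists_length_le[of \<Omega> "Suc n"]]) (auto simp: hit_paths_def)

context kchain
begin

lemma term_bound:
  assumes xs: "xs \<in> hit_paths \<Omega> A \<eta> n"
  shows "path_weight R \<Omega> xs * holding_sum_lt R \<Omega> xs S \<le> exp (\<gamma> * S) * W f xs"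
    and "0 \<le> path_weight R \<Omega> xs * holding_sum_lt R \<Omega> xs S"
proof -
  have len: "length xs = Suc n" and sx: "set xs \<subseteq> \<Omega>" using hit_len[OF xs] by auto
  have xsO: "xs ! i \<in> \<Omega>" if "i < Suc n" for i using sx that len by (metis nth_mem subsetD)
  have pw0: "0 \<le> path_weight R \<Omega> xs" unfolding path_weight_W
    by (rule W_nonneg[OF jp_nn[OF Rnn]]) (use sx in auto)
  have h0: "0 \<le> holding_sum_lt R \<Omega> xs S" by (simp add: holding_sum_lt_def)
  show "0 \<le> path_weight R \<Omega> xs * holding_sum_lt R \<Omega> xs S" using pw0 h0 by simp
  have Wf0: "0 \<le> W f xs" using Wf_nn[OF sx] .
  show "path_weight R \<Omega> xs * holding_sum_lt R \<Omega> xs S \<le> exp (\<gamma> * S) * W f xs"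
  proof (cases "\<exists>i<n. lam (xs ! i) = 0")
    case True
    then obtain i where i: "i < n" "lam (xs ! i) = 0" by auto
    have "path_weight R \<Omega> xs = 0" unfolding path_weight_def len
      using i by (intro prod_zero) (auto simp: jump_prob_def lam_def)
    then show ?thesis using Wf0 by simp
  next
    case False
    then have lp: "0 < rate_out R \<Omega> (xs ! i)" if "i < n" for i
      using lam_nn[OF xsO, of i] that by (force simp: lam_def)
    have "holding_sum_lt R \<Omega> xs S \<le> exp (\<gamma> * S) * (\<Prod>i<n. rate_out R \<Omega> (xs ! i) / (rate_out R \<Omega> (xs ! i) + \<gamma>))"
      unfolding holding_sum_lt_def holding_law_def len diff_Suc_1
      by (rule hold_meas(1)[OF lp gpos])
    then have "path_weight R \<Omega> xs * holding_sum_lt R \<Omega> xs S \<le>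
        path_weight R \<Omega> xs * (exp (\<gamma> * S) * (\<Prod>i<n. rate_out R \<Omega> (xs ! i) / (rate_out R \<Omega> (xs ! i) + \<gamma>)))"
      using pw0 by (rule mult_left_mono)
    also have "\<dots> = exp (\<gamma> * S) * ((\<Prod>i<n. jump_prob R \<Omega> (xs ! i) (xs ! Suc i)) * (\<Prod>i<n. (rate_out R \<Omega> (xs ! i) / (rate_out R \<Omega> (xs ! i) + \<gamma>))))"
      unfolding path_weight_def len diff_Suc_1 by (simp only: mult_ac)
    also have "\<dots> = exp (\<gamma> * S) * (\<Prod>i<n. jump_prob R \<Omega> (xs ! i) (xs ! Suc i) * (rate_out R \<Omega> (xs ! i) / (rate_out R \<Omega> (xs ! i) + \<gamma>)))"
      by (simp only: prod.distrib)
    also have "(\<Prod>i<n. jump_prob R \<Omega> (xs ! i) (xs ! Suc i) * (rate_out R \<Omega> (xs ! i) / (rate_out R \<Omega> (xs ! i) + \<gamma>)))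
        = (\<Prod>i<n. f (xs ! i) (xs ! Suc i))"
    proof (intro prod.cong refl)
      fix i assume "i \<in> {..<n}"
      then have "rate_out R \<Omega> (xs ! i) \<noteq> 0" using lp by (simp add: less_imp_neq[symmetric])
      then show "jump_prob R \<Omega> (xs ! i) (xs ! Suc i) * (rate_out R \<Omega> (xs ! i) / (rate_out R \<Omega> (xs ! i) + \<gamma>))
          = f (xs ! i) (xs ! Suc i)"
        by (simp add: jump_prob_def f_def lam_def)
    qed
    also have "\<dots> = W f xs" by (simp add: W_prod len)
    finally show ?thesis .
  qed
qed

lemma hp_partial:
  assumes etaA: "\<eta> \<notin> A"
  shows "(\<Sum>n<K. \<Sum>xs\<in>hit_paths \<Omega> A \<eta> n. path_weight R \<Omega> xs * holding_sum_lt R \<Omega> xs S)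
     \<le> exp (\<gamma> * S) * (E / (\<nu> \<eta> * (lam \<eta> + \<gamma>) * esc))"
proof -
  have c: "0 < \<nu> \<eta> * (lam \<eta> + \<gamma>) * esc" using nupos[OF etaO] lamg_pos[OF etaO] esc_pos by simp
  have "(\<Sum>n<K. \<Sum>xs\<in>hit_paths \<Omega> A \<eta> n. path_weight R \<Omega> xs * holding_sum_lt R \<Omega> xs S)
      \<le> (\<Sum>n<K. \<Sum>xs\<in>hit_paths \<Omega> A \<eta> n. exp (\<gamma> * S) * W f xs)"
    by (intro sum_mono term_bound(1))
  also have "\<dots> = exp (\<gamma> * S) * (\<Sum>n<K. sum (W f) (hit_paths \<Omega> A \<eta> n))"
    by (simp add: sum_distrib_left)
  also have "(\<Sum>n<K. sum (W f) (hit_paths \<Omega> A \<eta> n)) = sum (W f) (\<Union>n\<in>{..<K}. hit_paths \<Omega> A \<eta> n)"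
  proof (rule sum.UNION_disjoint[symmetric])
    show "finite {..<K}" by simp
    show "\<forall>i\<in>{..<K}. finite (hit_paths \<Omega> A \<eta> i)" using fin_hit[OF finO] by blast
    show "\<forall>i\<in>{..<K}. \<forall>j\<in>{..<K}. i \<noteq> j \<longrightarrow> hit_paths \<Omega> A \<eta> i \<inter> hit_paths \<Omega> A \<eta> j = {}"
      by (auto simp: hit_paths_def)
  qed
  also have "\<dots> \<le> sum (W f) (Hit K)"
  proof (rule sum_mono2[OF fin_Hit])
    show "(\<Union>n\<in>{..<K}. hit_paths \<Omega> A \<eta> n) \<subseteq> Hit K"
      by (auto simp: hit_paths_def Hit_def)
    show "0 \<le> W f b" if "b \<in> Hit K - (\<Union>n\<in>{..<K}. hit_paths \<Omega> A \<eta> n)" for b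
      using that by (auto simp: Hit_def intro!: Wf_nn)
  qed
  also have "\<dots> \<le> E / (\<nu> \<eta> * (lam \<eta> + \<gamma>) * esc)"
    using hit_bound[OF etaA, of K] c by (simp add: pos_le_divide_eq)
  finally show ?thesis by (simp add: mult_left_mono)
qed

lemma cap_pos: "0 < cap_star R \<Omega> \<nu> \<gamma> \<eta>"
  unfolding cap_eq using nupos[OF etaO] lamg_pos[OF etaO] esc_pos by simp

lemma prob_notA:
  assumes etaA: "\<eta> \<notin> A"
  shows "0 \<le> prob_hit_before R \<Omega> A \<eta> S"
    and "prob_hit_before R \<Omega> A \<eta> S \<le> exp (\<gamma> * S) * E * (1 / cap_star R \<Omega> \<nu> \<gamma> \<eta>)"
proof -
  define hp where "hp n = (\<Sum>xs\<in>hit_paths \<Omega> A \<eta> n. path_weight R \<Omega> xs * holding_sum_lt R \<Omega> xs S)" for n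
  have hp0: "0 \<le> hp n" for n unfolding hp_def by (intro sum_nonneg term_bound(2))
  have sm: "summable hp"
    by (rule summableI_nonneg_bounded[OF hp0]) (use hp_partial[OF etaA] in \<open>simp add: hp_def\<close>)
  have eq: "prob_hit_before R \<Omega> A \<eta> S = suminf hp" by (simp add: prob_hit_before_def hp_def[abs_def])
  show "0 \<le> prob_hit_before R \<Omega> A \<eta> S" unfolding eq by (rule suminf_nonneg[OF sm hp0])
  have "prob_hit_before R \<Omega> A \<eta> S \<le> exp (\<gamma> * S) * (E / (\<nu> \<eta> * (lam \<eta> + \<gamma>) * esc))"
    unfolding eq by (rule suminf_le_const[OF sm]) (use hp_partial[OF etaA] in \<open>simp add: hp_def\<close>)
  also have "E / (\<nu> \<eta> * (lam \<eta> + \<gamma>) * esc) = E * (1 / cap_star R \<Omega> \<nu> \<gamma> \<eta>) / 2"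
    by (simp add: cap_eq)
  also have "\<dots> \<le> E * (1 / cap_star R \<Omega> \<nu> \<gamma> \<eta>)"
  proof -
    have "0 \<le> E * (1 / cap_star R \<Omega> \<nu> \<gamma> \<eta>)" using E_nn cap_pos by simp
    moreover have "\<And>x::real. 0 \<le> x \<Longrightarrow> x / 2 \<le> x" by simp
    ultimately show ?thesis by blast
  qed
  finally show "prob_hit_before R \<Omega> A \<eta> S \<le> exp (\<gamma> * S) * E * (1 / cap_star R \<Omega> \<nu> \<gamma> \<eta>)"
    by (simp add: mult.assoc)
qed

end

lemma prob_inA:
  assumes fin: "finite \<Omega>" and AO: "A \<subseteq> \<Omega>" and eA: "\<eta> \<in> A"
  shows "0 \<le> prob_hit_before R \<Omega> A \<eta> S \<and> prob_hit_before R \<Omega> A \<eta> S \<le> 1"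
proof -
  define hp where "hp n = (\<Sum>xs\<in>hit_paths \<Omega> A \<eta> n. path_weight R \<Omega> xs * holding_sum_lt R \<Omega> xs S)" for n
  have z: "hit_paths \<Omega> A \<eta> n = {}" if "n \<noteq> 0" for n
    using that eA by (auto simp: hit_paths_def)
  have "hit_paths \<Omega> A \<eta> 0 = {[\<eta>]}"
  proof safe
    fix xs assume "xs \<in> hit_paths \<Omega> A \<eta> 0"
    then show "xs = [\<eta>]" by (cases xs) (auto simp: hit_paths_def)
  qed (use eA AO in \<open>auto simp: hit_paths_def\<close>)
  then have h0: "hp 0 = holding_sum_lt R \<Omega> [\<eta>] S"
    by (simp add: hp_def path_weight_def)
  have eq: "prob_hit_before R \<Omega> A \<eta> S = hp 0"
  proof -
    have "prob_hit_before R \<Omega> A \<eta> S = suminf hp" by (simp add: prob_hit_before_def hp_def[abs_def])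
    also have "\<dots> = sum hp {0}" by (rule suminf_finite) (auto simp: hp_def z)
    finally show ?thesis by simp
  qed
  have "holding_sum_lt R \<Omega> [\<eta>] S \<le> 1"
    unfolding holding_sum_lt_def holding_law_def using hold_meas(2)[of 0 _ 1] by simp
  moreover have "0 \<le> holding_sum_lt R \<Omega> [\<eta>] S" by (simp add: holding_sum_lt_def)
  ultimately show ?thesis using eq h0 by simp
qed

lemma nu_pos:
  assumes fin: "finite \<Omega>" and Rnn: "\<And>x y. x \<in> \<Omega> \<Longrightarrow> y \<in> \<Omega> \<Longrightarrow> 0 \<le> R x y"
    and irr: "irreducible_rates R \<Omega>" and st: "stationary R \<Omega> \<nu>" and x: "x \<in> \<Omega>"
  shows "0 < \<nu> x"
proof (rule ccontr)
  assume "\<not> 0 < \<nu> x"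
  moreover have nn: "\<And>z. z \<in> \<Omega> \<Longrightarrow> 0 \<le> \<nu> z" using st by (simp add: stationary_def)
  ultimately have x0: "\<nu> x = 0" using x by force
  define rel where "rel = {(a, b). a \<in> \<Omega> \<and> b \<in> \<Omega> \<and> R a b > 0}"
  have bk: "\<nu> a = 0" if "(a, x) \<in> rtrancl rel" for a
    using that
  proof (induction rule: converse_rtrancl_induct)
    case base
    then show ?case using x0 .
  next
    case (step a b)
    then have ab: "a \<in> \<Omega>" "b \<in> \<Omega>" "R a b > 0" by (auto simp: rel_def)
    have "(\<Sum>z\<in>\<Omega>. \<nu> z * R z b) = \<nu> b * rate_out R \<Omega> b" using st ab by (simp add: stationary_def)
    then have "(\<Sum>z\<in>\<Omega>. \<nu> z * R z b) = 0" using step by simp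
    moreover have "\<forall>z\<in>\<Omega>. 0 \<le> \<nu> z * R z b" using nn Rnn ab by auto
    ultimately have "\<forall>z\<in>\<Omega>. \<nu> z * R z b = 0" using fin by (simp only: sum_nonneg_eq_0_iff)
    then have "\<nu> a * R a b = 0" using ab by blast
    then show ?case using ab by simp
  qed
  have "\<forall>a\<in>\<Omega>. \<nu> a = 0"
  proof
    fix a assume "a \<in> \<Omega>"
    then have "(a, x) \<in> rtrancl rel" using irr x by (simp add: irreducible_rates_def rel_def)
    then show "\<nu> a = 0" by (rule bk)
  qed
  then have "(\<Sum>z\<in>\<Omega>. \<nu> z) = 0" by simp
  then show False using st by (simp add: stationary_def)
qed



theorem lemma3p8:
  fixes \<Omega> :: "nat \<Rightarrow> 'a set" and R :: "nat \<Rightarrow> 'a \<Rightarrow> 'a \<Rightarrow> real"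
    and \<nu> \<mu> :: "nat \<Rightarrow> 'a \<Rightarrow> real" and A :: "nat \<Rightarrow> 'a set"
    and S \<gamma> :: "nat \<Rightarrow> real"
  assumes fin: "\<And>N. N \<ge> 1 \<Longrightarrow> finite (\<Omega> N) \<and> \<Omega> N \<noteq> {}"
    and rates_nonneg: "\<And>N x y. N \<ge> 1 \<Longrightarrow> x \<in> \<Omega> N \<Longrightarrow> y \<in> \<Omega> N \<Longrightarrow> R N x y \<ge> 0"
    and no_self: "\<And>N x. N \<ge> 1 \<Longrightarrow> x \<in> \<Omega> N \<Longrightarrow> R N x x = 0"
    and irred: "\<And>N. N \<ge> 1 \<Longrightarrow> irreducible_rates (R N) (\<Omega> N)"
    and stat: "\<And>N. N \<ge> 1 \<Longrightarrow> stationary (R N) (\<Omega> N) (\<nu> N)"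
    and A_sub: "\<And>N. N \<ge> 1 \<Longrightarrow> A N \<subseteq> \<Omega> N"
    and nu_A: "(\<lambda>N. \<Sum>x\<in>A N. \<nu> N x) \<longlonglongrightarrow> 0"
    and S_pos: "\<And>N. N \<ge> 1 \<Longrightarrow> S N > 0"
    and mu: "\<And>N. N \<ge> 1 \<Longrightarrow> prob_on (\<Omega> N) (\<mu> N)"
    and gamma_pos: "\<And>N. N \<ge> 1 \<Longrightarrow> \<gamma> N > 0"
    and gamma_S: "(\<lambda>N. S N / inverse (\<gamma> N)) \<longlonglongrightarrow> 0"
    and main: "(\<lambda>N. (\<Sum>x\<in>A N. \<mu> N x)
                 + (\<Sum>\<eta>\<in>\<Omega> N. \<nu> N \<eta> * (if \<eta> \<notin> A N then (\<Sum>\<zeta>\<in>A N. R N \<eta> \<zeta>) else 0))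
                   * (\<Sum>\<eta>\<in>\<Omega> N. \<mu> N \<eta> * (1 / cap_star (R N) (\<Omega> N) (\<nu> N) (\<gamma> N) \<eta>)))
               \<longlonglongrightarrow> 0"
  shows "(\<lambda>N. \<Sum>\<eta>\<in>\<Omega> N. \<mu> N \<eta> * prob_hit_before (R N) (\<Omega> N) (A N) \<eta> (S N)) \<longlonglongrightarrow> 0"
proof -
  define G where "G N = (\<Sum>x\<in>A N. \<mu> N x)
                 + (\<Sum>\<eta>\<in>\<Omega> N. \<nu> N \<eta> * (if \<eta> \<notin> A N then (\<Sum>\<zeta>\<in>A N. R N \<eta> \<zeta>) else 0))
                   * (\<Sum>\<eta>\<in>\<Omega> N. \<mu> N \<eta> * (1 / cap_star (R N) (\<Omega> N) (\<nu> N) (\<gamma> N) \<eta>))" for N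
  define F where "F N = (\<Sum>\<eta>\<in>\<Omega> N. \<mu> N \<eta> * prob_hit_before (R N) (\<Omega> N) (A N) \<eta> (S N))" for N
  have bnd: "0 \<le> F N \<and> F N \<le> exp (\<gamma> N * S N) * G N" if N: "N \<ge> 1" for N
  proof -
    note finN = fin[OF N, THEN conjunct1]
    have nup: "\<And>x. x \<in> \<Omega> N \<Longrightarrow> 0 < \<nu> N x"
      using nu_pos[OF finN rates_nonneg[OF N] irred[OF N] stat[OF N]] by blast
    have kc: "kchain (\<Omega> N) (R N) (\<nu> N) (A N) (\<gamma> N) \<eta>" if "\<eta> \<in> \<Omega> N" for \<eta>
      by (unfold_locales) (use finN rates_nonneg[OF N] stat[OF N] nup A_sub[OF N] gamma_pos[OF N] that in auto)
    define E where "E = (\<Sum>\<eta>\<in>\<Omega> N. \<nu> N \<eta> * (if \<eta> \<notin> A N then (\<Sum>\<zeta>\<in>A N. R N \<eta> \<zeta>) else 0))"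
    define c where "c \<eta> = 1 / cap_star (R N) (\<Omega> N) (\<nu> N) (\<gamma> N) \<eta>" for \<eta>
    define ex where "ex = exp (\<gamma> N * S N)"
    have ex1: "1 \<le> ex" unfolding ex_def using gamma_pos[OF N] S_pos[OF N] by simp
    have E0: "0 \<le> E" using kchain.E_nn[OF kc] kchain.E_def[OF kc] fin N
      by (metis E_def all_not_in_conv)
    have c0: "0 \<le> c \<eta>" if "\<eta> \<in> \<Omega> N" for \<eta>
      using kchain.cap_pos[OF kc[OF that]] by (simp add: c_def)
    have mu0: "0 \<le> \<mu> N \<eta>" if "\<eta> \<in> \<Omega> N" for \<eta> using mu[OF N] that by (simp add: prob_on_def)
    have pt: "0 \<le> prob_hit_before (R N) (\<Omega> N) (A N) \<eta> (S N) \<and>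
        prob_hit_before (R N) (\<Omega> N) (A N) \<eta> (S N) \<le> (if \<eta> \<in> A N then 1 else 0) + ex * E * c \<eta>"
      if e: "\<eta> \<in> \<Omega> N" for \<eta>
    proof (cases "\<eta> \<in> A N")
      case True
      have "0 \<le> ex * E * c \<eta>" using ex1 E0 c0[OF e] by simp
      moreover note prob_inA[OF finN A_sub[OF N] True, of "R N" "S N"]
      ultimately show ?thesis using True by simp
    next
      case False
      show ?thesis using kchain.prob_notA[OF kc[OF e] False] kchain.E_def[OF kc[OF e]] False
        by (simp add: E_def c_def ex_def)
    qed
    have "F N \<le> (\<Sum>\<eta>\<in>\<Omega> N. \<mu> N \<eta> * ((if \<eta> \<in> A N then 1 else 0) + ex * E * c \<eta>))"
      unfolding F_def using pt mu0 by (intro sum_mono mult_left_mono) auto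
    also have "\<dots> = (\<Sum>\<eta>\<in>\<Omega> N. if \<eta> \<in> A N then \<mu> N \<eta> else 0) + ex * (E * (\<Sum>\<eta>\<in>\<Omega> N. \<mu> N \<eta> * c \<eta>))"
    proof -
      have "\<mu> N \<eta> * ((if \<eta> \<in> A N then 1 else 0) + ex * E * c \<eta>) = (if \<eta> \<in> A N then \<mu> N \<eta> else 0) + ex * (E * (\<mu> N \<eta> * c \<eta>))" for \<eta>
        by (cases "\<eta> \<in> A N") (simp_all add: algebra_simps)
      then show ?thesis by (simp add: sum.distrib sum_distrib_left)
    qed
    also have "(\<Sum>\<eta>\<in>\<Omega> N. if \<eta> \<in> A N then \<mu> N \<eta> else 0) = (\<Sum>x\<in>A N. \<mu> N x)"
      using finN A_sub[OF N] by (simp add: sum.inter_restrict[symmetric] Int_absorb1)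
    also have "(\<Sum>x\<in>A N. \<mu> N x) + ex * (E * (\<Sum>\<eta>\<in>\<Omega> N. \<mu> N \<eta> * c \<eta>)) \<le> ex * G N"
    proof -
      have "0 \<le> (\<Sum>x\<in>A N. \<mu> N x)" using mu0 A_sub[OF N] by (auto intro!: sum_nonneg)
      then have "(\<Sum>x\<in>A N. \<mu> N x) \<le> ex * (\<Sum>x\<in>A N. \<mu> N x)" using ex1
        using mult_right_mono[of 1 ex "(\<Sum>x\<in>A N. \<mu> N x)"] by simp
      then show ?thesis by (simp add: G_def E_def c_def algebra_simps)
    qed
    finally have up: "F N \<le> exp (\<gamma> N * S N) * G N" by (simp add: ex_def)
    have "0 \<le> F N" unfolding F_def using pt mu0 by (intro sum_nonneg mult_nonneg_nonneg) auto
    then show ?thesis using up by simp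
  qed
  have "(\<lambda>N. \<gamma> N * S N) \<longlonglongrightarrow> 0"
    using gamma_S by (simp add: divide_inverse mult.commute)
  then have "(\<lambda>N. exp (\<gamma> N * S N)) \<longlonglongrightarrow> exp 0" by (rule tendsto_exp)
  then have "(\<lambda>N. exp (\<gamma> N * S N) * G N) \<longlonglongrightarrow> exp 0 * 0"
    using main unfolding G_def by (rule tendsto_mult)
  then have lim: "(\<lambda>N. exp (\<gamma> N * S N) * G N) \<longlonglongrightarrow> 0" by simp
  have ev: "eventually (\<lambda>N. N \<ge> 1) sequentially" by (rule eventually_ge_at_top)
  have "F \<longlonglongrightarrow> 0"
  proof (rule tendsto_sandwich[OF _ _ tendsto_const lim])
    show "eventually (\<lambda>N. 0 \<le> F N) sequentially" using ev by eventually_elim (use bnd in blast)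
    show "eventually (\<lambda>N. F N \<le> exp (\<gamma> N * S N) * G N) sequentially" using ev by eventually_elim (use bnd in blast)
  qed
  then show ?thesis by (simp add: F_def[abs_def])
qed

end
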